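(* Let $G_n$, $m$, $g$ and $\alpha$ be as in the context. Let $(u,v)$ be an arc of $G_n$ with $u\neq m$ and $v\neq m$, and let $l(uv)$ denote its label. Then $l(uv)\leq \alpha(u)$. Moreover, if $l(uv)<\alpha(u)$ then $g(v)=\varepsilon$, and if $l(uv)=\alpha(u)$ then $g(v)=g(u)\,l(uv)$.
   Context: Let $A$ be a finite alphabet with a linear order $<$, extended to the lexicographic order on words: $x<y$ if $x$ is a proper prefix of $y$, or $x=uav$, $y=ubw$ with $a,b\in A$, $a<b$. Let $\mathcal{F}$ be a set of words over $A$ (forbidden words). A word $w$ is in the language if the bi-infinite periodic sequence $\cdots www\cdots$ contains no element of $\mathcal{F}$ as a factor; $W_k$ denotes the set of words of length $k$ in the language. Fix $n\geq 1$ and consider the digraph with vertex set $A^n$ and arcs $(as,sb)$ for $a,b\in A$, $s\in A^{n-1}$, $asb\in W_{n+1}$, the label of $(as,sb)$ being $b$. The de Bruijn graph of span $n$, $G_n$, is a strongly connected component of maximum size of this digraph; vertices are identified with their words. Let $m=m_1\cdots m_n$ be the vertex of $G_n$ whose word is lexicographically largest. For a vertex $u\neq m$, $g(u)$ is the longest word which is both a prefix of $m$ and a suffix of $u$ (possibly the empty word $\varepsilon$; necessarily $|g(u)|<n$), and $\alpha(u)=m_{|g(u)|+1}$. *)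

theory Defs
  imports Main "HOL-Library.Sublist"
begin

text \<open>f is a factor of the bi-infinite periodic sequence ... w w w ...\<close>
definition occurs_periodic :: "'a list \<Rightarrow> 'a list \<Rightarrow> bool" where
  "occurs_periodic f w \<longleftrightarrow> (\<exists>i::nat. \<forall>j<length f. f ! j = w ! ((i + j) mod length w))"

definition in_lang :: "'a list set \<Rightarrow> 'a list \<Rightarrow> bool" where
  "in_lang F w \<longleftrightarrow> (\<forall>f\<in>F. \<not> occurs_periodic f w)"

definition W :: "'a set \<Rightarrow> 'a list set \<Rightarrow> nat \<Rightarrow> 'a list set" where
  "W A F k = {w. length w = k \<and> set w \<subseteq> A \<and> in_lang F w}"

definition vert :: "'a set \<Rightarrow> nat \<Rightarrow> 'a list set" where
  "vert A n = {w. length w = n \<and> set w \<subseteq> A}"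

text \<open>Arc (a s, s b) of the span-n digraph, present iff a s b is in W_{n+1}; its label is b = last v.\<close>
definition arc :: "'a set \<Rightarrow> 'a list set \<Rightarrow> nat \<Rightarrow> 'a list \<Rightarrow> 'a list \<Rightarrow> bool" where
  "arc A F n u v \<longleftrightarrow> u \<in> vert A n \<and> v \<in> vert A n \<and> tl u = butlast v
      \<and> u @ [last v] \<in> W A F (Suc n)"

definition arcs :: "'a set \<Rightarrow> 'a list set \<Rightarrow> nat \<Rightarrow> ('a list \<times> 'a list) set" where
  "arcs A F n = {(u, v). arc A F n u v}"

definition strongly_connected_set :: "'a set \<Rightarrow> 'a list set \<Rightarrow> nat \<Rightarrow> 'a list set \<Rightarrow> bool" where
  "strongly_connected_set A F n C \<longleftrightarrow> C \<subseteq> vert A n \<and>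
     (\<forall>u\<in>C. \<forall>v\<in>C. (u, v) \<in> (arcs A F n)\<^sup>*)"

definition scc :: "'a set \<Rightarrow> 'a list set \<Rightarrow> nat \<Rightarrow> 'a list set \<Rightarrow> bool" where
  "scc A F n C \<longleftrightarrow> C \<noteq> {} \<and> strongly_connected_set A F n C \<and>
     (\<forall>D. strongly_connected_set A F n D \<and> C \<subseteq> D \<longrightarrow> D = C)"

text \<open>C is (the vertex set of) a de Bruijn graph G_n: an SCC of maximum size.\<close>
definition is_G :: "'a set \<Rightarrow> 'a list set \<Rightarrow> nat \<Rightarrow> 'a list set \<Rightarrow> bool" where
  "is_G A F n C \<longleftrightarrow> scc A F n C \<and> (\<forall>D. scc A F n D \<longrightarrow> card D \<le> card C)"

definition g :: "'a list \<Rightarrow> 'a list \<Rightarrow> 'a list" where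
  "g m u = (ARG_MAX length x. prefix x m \<and> suffix x u)"

definition alpha :: "'a list \<Rightarrow> 'a list \<Rightarrow> 'a" where
  "alpha m u = m ! length (g m u)"

end

theory Submission
  imports Defs
begin

lemma lex_lt:
  fixes a b :: "'a::linorder"
  assumes "a < b"
  shows "List.lexordp (<) (p @ a # x) (p @ b # y)"
  using assms unfolding List.lexordp_def by (simp add: lexord_append_left_rightI)

lemma lex_asym:
  fixes xs ys :: "'a::linorder list"
  assumes "List.lexordp (<) xs ys" "List.lexordp (<) ys xs"
  shows False
proof -
  have t: "trans {(x::'a, y). x < y}" by (auto simp: trans_def)
  have "(xs, xs) \<in> lexord {(x::'a, y). x < y}"
    using assms unfolding List.lexordp_def by (metis lexord_trans t)
  moreover have "(xs, xs) \<notin> lexord {(x::'a, y). x < y}" by (rule lexord_irreflexive) simp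
  ultimately show False by simp
qed

lemma g_props:
  "prefix (g m x) m \<and> suffix (g m x) x"
proof -
  have "(\<lambda>y. prefix y m \<and> suffix y x) (ARG_MAX length y. prefix y m \<and> suffix y x)"
    by (rule arg_max_natI[where k="[]" and b="Suc (length m)"])
       (auto dest: prefix_length_le)
  then show ?thesis by (simp add: g_def)
qed

lemma g_max:
  assumes "prefix y m" "suffix y x"
  shows "length y \<le> length (g m x)"
  unfolding g_def
  by (rule arg_max_nat_le[where b="Suc (length m)"]) (use assms in \<open>auto dest: prefix_length_le\<close>)

lemma prefix_take: "prefix y m \<Longrightarrow> y = take (length y) m"
  by (metis append_eq_conv_conj prefix_def)

lemma suffix_eq_drop: "suffix y x \<Longrightarrow> y = drop (length x - length y) x"
  by (metis suffix_def append_eq_conv_conj add_diff_cancel_right' length_append)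

lemma succ_exists:
  assumes G: "is_G A F n C" and x: "x \<in> C" and z: "z \<in> C" and xz: "x \<noteq> z"
  shows "\<exists>y\<in>C. arc A F n x y"
proof -
  from G have sc: "strongly_connected_set A F n C" and
    mx: "\<forall>D. strongly_connected_set A F n D \<and> C \<subseteq> D \<longrightarrow> D = C"
    unfolding is_G_def scc_def by auto
  from sc x z have "(x, z) \<in> (arcs A F n)\<^sup>*" unfolding strongly_connected_set_def by auto
  with xz obtain y where xy: "(x, y) \<in> arcs A F n" and yz: "(y, z) \<in> (arcs A F n)\<^sup>*"
    by (metis converse_rtranclE)
  have "strongly_connected_set A F n (insert y C)"
    unfolding strongly_connected_set_def
  proof (intro conjI ballI)
    show "insert y C \<subseteq> vert A n" using sc xy unfolding strongly_connected_set_def arcs_def arc_def by auto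
  next
    fix p q assume p: "p \<in> insert y C" and q: "q \<in> insert y C"
    have Cr: "\<And>c d. c \<in> C \<Longrightarrow> d \<in> C \<Longrightarrow> (c, d) \<in> (arcs A F n)\<^sup>*"
      using sc unfolding strongly_connected_set_def by auto
    have cy: "\<And>c. c \<in> C \<Longrightarrow> (c, y) \<in> (arcs A F n)\<^sup>*"
      using Cr x xy by (meson rtrancl.rtrancl_into_rtrancl)
    have yc: "\<And>c. c \<in> C \<Longrightarrow> (y, c) \<in> (arcs A F n)\<^sup>*"
      using Cr z yz by (meson rtrancl_trans)
    show "(p, q) \<in> (arcs A F n)\<^sup>*"
      using p q Cr cy yc by auto
  qed
  with mx have "insert y C = C" by blast
  then have "y \<in> C" by auto
  with xy show ?thesis unfolding arcs_def by auto
qed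

lemma shift_exists:
  assumes G: "is_G A F n C" and z: "z \<in> C"
    and succ: "\<And>x. x \<in> C \<Longrightarrow> \<exists>y\<in>C. arc A F n x y"
    and x: "x \<in> C"
  shows "k \<le> n \<Longrightarrow> \<exists>w\<in>C. take (n - k) w = drop k x"
proof (induct k)
  case 0
  have "length x = n" using G x unfolding is_G_def scc_def strongly_connected_set_def vert_def by auto
  then show ?case using x by (intro bexI[of _ x]) auto
next
  case (Suc k)
  then obtain w where w: "w \<in> C" "take (n - k) w = drop k x" by auto
  obtain y where y: "y \<in> C" "arc A F n w y" using succ w(1) by blast
  have lw: "length w = n" and ly: "length y = n" using y(2) unfolding arc_def vert_def by auto
  have "tl w = butlast y" using y(2) unfolding arc_def by auto
  then have "drop 1 w = take (n - 1) y" using ly by (simp add: butlast_conv_take drop_Suc)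
  have "drop (Suc k) x = drop 1 (take (n - k) w)" using w(2) by (simp add: drop_Suc tl_drop)
  also have "\<dots> = take (n - Suc k) (drop 1 w)" by (simp add: drop_take)
  also have "\<dots> = take (n - Suc k) y" using \<open>drop 1 w = take (n - 1) y\<close> Suc.prems by simp
  finally show ?case using y(1) by auto
qed

theorem lemma3:
  fixes A :: "'a::linorder set" and F :: "'a list set" and n :: nat
    and C :: "'a list set" and m u v :: "'a list"
  assumes "finite A" and "n \<ge> 1"
    and "is_G A F n C"
    and "m \<in> C" and "\<forall>x\<in>C. x \<noteq> m \<longrightarrow> lexordp (<) x m"
    and "u \<in> C" and "v \<in> C" and "arc A F n u v"
    and "u \<noteq> m" and "v \<noteq> m"
  shows "last v \<le> alpha m u \<and>
         (last v < alpha m u \<longrightarrow> g m v = []) \<and>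
         (last v = alpha m u \<longrightarrow> g m v = g m u @ [last v])"
proof -
  note G = assms(3)
  have succ: "\<And>x. x \<in> C \<Longrightarrow> \<exists>y\<in>C. arc A F n x y"
  proof -
    fix x assume x: "x \<in> C"
    show "\<exists>y\<in>C. arc A F n x y"
    proof (cases "x = m")
      case True then show ?thesis using succ_exists[OF G x assms(6)] assms(9) by auto
    next
      case False then show ?thesis using succ_exists[OF G x assms(4)] by auto
    qed
  qed
  have shift: "\<And>x k. x \<in> C \<Longrightarrow> k \<le> n \<Longrightarrow> \<exists>w\<in>C. take (n - k) w = drop k x"
    using shift_exists[OF G assms(4) succ] by blast
  have maxm: "\<And>w. w \<in> C \<Longrightarrow> \<not> lexordp (<) m w"
  proof
    fix w assume w: "w \<in> C" and l: "lexordp (<) m w"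
    then have "w \<noteq> m" using lex_asym by metis
    with assms(5) w have "lexordp (<) w m" by auto
    with l show False by (meson lex_asym)
  qed
  have lm: "length m = n" using G assms(4) unfolding is_G_def scc_def strongly_connected_set_def vert_def by auto
  have lu: "length u = n" and lv: "length v = n" and tlu: "tl u = butlast v"
    using assms(8) unfolding arc_def vert_def by auto
  define b where "b = last v"
  have v_eq: "v = tl u @ [b]"
    using tlu lv assms(2) b_def by (metis append_butlast_last_id list.size(3) not_one_le_zero)
  define s where "s = g m u"
  define k where "k = length s"
  have s_pre: "prefix s m" and s_suf: "suffix s u" using g_props s_def by auto
  have sm: "s = take k m" using prefix_take[OF s_pre] k_def by simp
  have "k \<le> n" using s_pre lm k_def by (metis prefix_length_le)
  have kn: "k < n"
  proof (rule ccontr)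
    assume "\<not> k < n"
    then have "k = n" using \<open>k \<le> n\<close> by simp
    have "s = take n m" using sm \<open>k = n\<close> by simp
    then have "s = m" using lm by simp
    have "s = drop (length u - length s) u" by (rule suffix_eq_drop[OF s_suf])
    then have "s = u" using lu \<open>k = n\<close> k_def by simp
    note \<open>s = m\<close> this
    with assms(9) show False by simp
  qed
  define a where "a = m ! k"
  have al: "alpha m u = a" unfolding alpha_def a_def k_def s_def by simp
  have ma: "take (Suc k) m = s @ [a]" using sm kn lm a_def by (simp add: take_Suc_conv_app_nth)
  have su: "s = drop (n - k) u" using suffix_eq_drop[OF s_suf] lu k_def by simp
  have vs: "drop (n - Suc k) v = s @ [b]"
  proof -
    have "drop (n - Suc k) v = drop (n - Suc k) (tl u) @ [b]" using v_eq lu kn by simp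
    also have "drop (n - Suc k) (tl u) = drop (Suc (n - Suc k)) u" by (simp add: drop_Suc drop_tl)
    also have "Suc (n - Suc k) = n - k" using kn by simp
    finally show ?thesis using su by simp
  qed
  have gv_form: "\<And>t. g m v = t @ [b] \<Longrightarrow> length t \<le> k \<and> take (Suc (length t)) m = t @ [b]"
  proof -
    fix t assume tb: "g m v = t @ [b]"
    have p: "prefix (t @ [b]) m" and sf: "suffix (t @ [b]) v" using g_props[of m v] tb by auto
    have "suffix t (tl u)" using sf v_eq by (simp add: suffix_def)
    then have "suffix t u" by (metis suffix_tl suffix_order.trans)
    moreover have "prefix t m" using p by (metis prefixI prefix_order.order_trans)
    ultimately have "length t \<le> k" using g_max k_def s_def by blast
    moreover have "take (Suc (length t)) m = t @ [b]" using prefix_take[OF p] by simp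
    ultimately show "length t \<le> k \<and> take (Suc (length t)) m = t @ [b]" by blast
  qed
  have gv_ne: "g m v \<noteq> [] \<Longrightarrow> \<exists>t. g m v = t @ [b]"
  proof -
    assume ne: "g m v \<noteq> []"
    have "suffix (g m v) (tl u @ [b])" using g_props[of m v] v_eq by simp
    with ne show ?thesis
      by (metis append_butlast_last_id suffix_snoc)
  qed
  have p1: "b \<le> a"
  proof (rule ccontr)
    assume "\<not> b \<le> a" then have ab: "a < b" by simp
    obtain w where w: "w \<in> C" "take (n - (n - Suc k)) w = drop (n - Suc k) v"
      using shift[OF assms(7), of "n - Suc k"] by auto
    have "take (Suc k) w = s @ [b]" using w(2) vs kn by (simp add: Suc_diff_Suc)
    then have "w = s @ b # drop (Suc k) w" by (metis append.assoc append_Cons append_Nil append_take_drop_id)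
    moreover have "m = s @ a # drop (Suc k) m" using ma by (metis append.assoc append_Cons append_Nil append_take_drop_id)
    ultimately have "lexordp (<) m w" using ab by (metis lex_lt)
    with maxm w(1) show False by blast
  qed
  have p2: "b < a \<Longrightarrow> g m v = []"
  proof (rule ccontr)
    assume ba: "b < a" and ne: "g m v \<noteq> []"
    then obtain t where tb: "g m v = t @ [b]" using gv_ne by blast
    define j where "j = length t"
    have jk: "j \<le> k" and mt: "take (Suc j) m = t @ [b]" using gv_form[OF tb] j_def by auto
    have tm: "t = take j m" using mt by (metis butlast_snoc butlast_take diff_Suc_1 j_def length_append_singleton take_take min.absorb1 le_SucI order_refl)
    show False
    proof (cases "j = k")
      case True
      then have "m ! k = b" using mt kn lm by (metis j_def nth_append_length nth_take lessI)
      with ba a_def show False by simp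
    next
      case False
      then have jk': "j < k" using jk by simp
      have "suffix t u"
      proof -
        have "suffix (t @ [b]) v" using g_props[of m v] tb by simp
        then have "suffix t (tl u)" using v_eq by (simp add: suffix_def)
        then show ?thesis by (metis suffix_tl suffix_order.trans)
      qed
      then have tu: "t = drop (n - j) u" using suffix_eq_drop lu j_def by metis
      have "drop (k - j) s = drop (k - j + (n - k)) u" using su by simp
      also have "k - j + (n - k) = n - j" using kn jk' by simp
      finally have "drop (k - j) s = t" using tu by simp
      obtain w where w: "w \<in> C" "take (n - (k - j)) w = drop (k - j) m"
        using shift[OF assms(4), of "k - j"] kn by (meson diff_le_self le_trans less_imp_le_nat)
      have "take (Suc j) (drop (k - j) m) = drop (k - j) (take (Suc k) m)"
        using jk' by (simp add: take_drop Suc_diff_le)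
      also have "\<dots> = t @ [a]" using ma \<open>drop (k - j) s = t\<close> jk' k_def by simp
      finally have tda: "take (Suc j) (drop (k - j) m) = t @ [a]" .
      have le: "Suc j \<le> n - (k - j)" using kn jk' by simp
      have "take (Suc j) w = take (Suc j) (take (n - (k - j)) w)" using le by (simp add: min_absorb1)
      then have "take (Suc j) w = t @ [a]" using w(2) tda by simp
      then have "w = t @ a # drop (Suc j) w" by (metis append.assoc append_Cons append_Nil append_take_drop_id)
      moreover have "m = t @ b # drop (Suc j) m" using mt by (metis append.assoc append_Cons append_Nil append_take_drop_id)
      ultimately have "lexordp (<) m w" using ba by (metis lex_lt)
      with maxm w(1) show False by blast
    qed
  qed
  have p3: "b = a \<Longrightarrow> g m v = s @ [b]"
  proof -
    assume ba: "b = a"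
    have "prefix (s @ [b]) m" using ma ba by (metis prefix_def append_take_drop_id)
    moreover have "suffix (s @ [b]) v" using vs by (metis append_take_drop_id suffixI)
    ultimately have ge: "Suc k \<le> length (g m v)" using g_max k_def by fastforce
    then obtain t where tb: "g m v = t @ [b]" using gv_ne by fastforce
    have "length t \<le> k" "take (Suc (length t)) m = t @ [b]" using gv_form[OF tb] by auto
    moreover have "length t = k" using ge tb calculation(1) by simp
    ultimately show ?thesis using ma ba tb by simp
  qed
  show ?thesis using p1 p2 p3 al b_def s_def by auto
qed

end
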